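(* Let $A$ be a finite abelian group of even order and $H$ a subgroup of $A$ such that every element of $H$ is a square in $A$. Then $H$ is a subgroup perfect code of $A$ if and only if $H=\{2a:a\in A\}$.
   Context: $A$ is written additively with identity $0$. An element $x$ of $A$ is a square if $x=2y$ for some $y\in A$; a subset is square-free if it contains no squares. For a square-free $T\subseteq A$, the Cayley sum graph $\mathrm{CayS}(A,T)$ is the simple graph with vertex set $A$ in which distinct $x,y$ are adjacent iff $x+y\in T$. A subset $C$ of the vertex set of a graph is a perfect code if every vertex is at distance at most one from exactly one vertex of $C$. A subgroup $H$ of $A$ is a subgroup perfect code of $A$ if $H$ is a perfect code of $\mathrm{CayS}(A,T)$ for some square-free $T\subseteq A$ (the empty set allowed). *)

theory Defs
  imports Main
begin

text \<open>The ambient finite abelian group A is the (finite) type 'a of class ab_group_add,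
  written additively with identity 0.\<close>

definition is_square :: "'a::ab_group_add \<Rightarrow> bool" where
  "is_square x \<longleftrightarrow> (\<exists>y. x = y + y)"

definition square_free :: "'a::ab_group_add set \<Rightarrow> bool" where
  "square_free T \<longleftrightarrow> (\<forall>x\<in>T. \<not> is_square x)"

definition cays_adj :: "'a::ab_group_add set \<Rightarrow> 'a \<Rightarrow> 'a \<Rightarrow> bool" where
  "cays_adj T x y \<longleftrightarrow> x \<noteq> y \<and> x + y \<in> T"

definition cays_perfect_code :: "'a::ab_group_add set \<Rightarrow> 'a set \<Rightarrow> bool" where
  "cays_perfect_code T C \<longleftrightarrow> (\<forall>v. \<exists>!c. c \<in> C \<and> (c = v \<or> cays_adj T v c))"

definition subgroup_add :: "'a::ab_group_add set \<Rightarrow> bool" where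
  "subgroup_add H \<longleftrightarrow> 0 \<in> H \<and> (\<forall>x\<in>H. \<forall>y\<in>H. x + y \<in> H) \<and> (\<forall>x\<in>H. - x \<in> H)"

definition subgroup_perfect_code :: "'a::ab_group_add set \<Rightarrow> bool" where
  "subgroup_perfect_code H \<longleftrightarrow> subgroup_add H \<and> (\<exists>T. square_free T \<and> cays_perfect_code T H)"

end

theory Submission
  imports Defs
begin

theorem lemma3p5:
  fixes H :: "'a::{ab_group_add, finite} set"
  assumes "even (card (UNIV :: 'a set))"
    and "subgroup_add H"
    and "\<forall>h\<in>H. is_square h"
  shows "subgroup_perfect_code H \<longleftrightarrow> H = {a + a | a. True}"
proof -
  define S :: "'a set" where "S = {a + a | a. True}"
  have Sadd: "x \<in> S \<Longrightarrow> y \<in> S \<Longrightarrow> x + y \<in> S" for x y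
  proof -
    assume "x \<in> S" "y \<in> S"
    then obtain a b where "x = a + a" "y = b + b" unfolding S_def by blast
    hence "x + y = (a + b) + (a + b)" by (simp add: algebra_simps)
    thus ?thesis unfolding S_def by blast
  qed
  have Sneg: "x \<in> S \<Longrightarrow> - x \<in> S" for x
  proof -
    assume "x \<in> S"
    then obtain a where "x = a + a" unfolding S_def by blast
    hence "- x = (- a) + (- a)" by simp
    thus ?thesis unfolding S_def by blast
  qed
  have Sdiff: "x \<in> S \<Longrightarrow> y \<in> S \<Longrightarrow> x - y \<in> S" for x y
    using Sadd[of x "- y"] Sneg[of y] by simp
  have sq: "is_square x \<longleftrightarrow> x \<in> S" for x
    unfolding S_def is_square_def by auto
  have HS: "H \<subseteq> S" using assms(3) sq by auto
  show ?thesis unfolding S_def[symmetric]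
  proof
    assume "subgroup_perfect_code H"
    then obtain T where sf: "square_free T" and pc: "cays_perfect_code T H"
      using subgroup_perfect_code_def by blast
    have "S \<subseteq> H"
    proof
      fix v assume v: "v \<in> S"
      from pc obtain c where c: "c \<in> H" "c = v \<or> cays_adj T v c"
        unfolding cays_perfect_code_def by blast
      have "c \<in> S" using c(1) HS by blast
      hence "v + c \<in> S" using v Sadd by blast
      hence "v + c \<notin> T" using sf sq unfolding square_free_def by auto
      thus "v \<in> H" using c unfolding cays_adj_def by auto
    qed
    thus "H = S" using HS by auto
  next
    assume HS': "H = S"
    define r where "r x = (SOME y. y - x \<in> S)" for x
    have r1: "r x - x \<in> S" for x
    proof -
      have "(0::'a) = 0 + 0" by simp
      hence "0 \<in> S" unfolding S_def by blast
      hence "x - x \<in> S" by simp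
      thus ?thesis unfolding r_def by (rule someI)
    qed
    have r2: "x - x' \<in> S \<Longrightarrow> r x = r x'" for x x'
    proof -
      assume a: "x - x' \<in> S"
      have "(\<lambda>y. y - x \<in> S) = (\<lambda>y. y - x' \<in> S)"
      proof
        fix y
        have e1: "y - x' = (y - x) + (x - x')" by simp
        have e2: "y - x = (y - x') - (x - x')" by simp
        show "(y - x \<in> S) = (y - x' \<in> S)"
        proof
          assume "y - x \<in> S" thus "y - x' \<in> S" by (subst e1) (rule Sadd[OF _ a])
        next
          assume "y - x' \<in> S" thus "y - x \<in> S" by (subst e2) (rule Sdiff[OF _ a])
        qed
      qed
      thus ?thesis unfolding r_def by simp
    qed
    define T where "T = {x. x \<notin> S \<and> r x = x}"
    have "square_free T" unfolding square_free_def T_def using sq by auto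
    moreover have "cays_perfect_code T H"
      unfolding cays_perfect_code_def
    proof
      fix v
      show "\<exists>!c. c \<in> H \<and> (c = v \<or> cays_adj T v c)"
      proof (cases "v \<in> S")
        case True
        show ?thesis
        proof (rule ex1I[of _ v])
          show "v \<in> H \<and> (v = v \<or> cays_adj T v v)" using True HS' by auto
        next
          fix c assume "c \<in> H \<and> (c = v \<or> cays_adj T v c)"
          moreover have "c \<in> H \<Longrightarrow> v + c \<notin> T" using True HS' Sadd unfolding T_def by blast
          ultimately show "c = v" unfolding cays_adj_def by auto
        qed
      next
        case False
        show ?thesis
        proof (rule ex1I[of _ "r v - v"])
          have "r v \<notin> S"
          proof
            assume "r v \<in> S"
            hence "r v - (r v - v) \<in> S" using Sdiff r1 by blast
            thus False using False by simp
          qed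
          moreover have "r (r v) = r v" using r2[OF r1[of v]] .
          ultimately have "v + (r v - v) \<in> T" unfolding T_def by simp
          moreover have "v \<noteq> r v - v" using False r1[of v] by metis
          ultimately show "r v - v \<in> H \<and> (r v - v = v \<or> cays_adj T v (r v - v))"
            using r1 HS' unfolding cays_adj_def by auto
        next
          fix c assume c: "c \<in> H \<and> (c = v \<or> cays_adj T v c)"
          hence cS: "c \<in> S" using HS' by auto
          hence "c \<noteq> v" using False by auto
          hence "v + c \<in> T" using c unfolding cays_adj_def by auto
          hence "r (v + c) = v + c" unfolding T_def by auto
          moreover have "r (v + c) = r v" using r2[of "v + c" v] cS by simp
          ultimately show "c = r v - v" by (metis add_diff_cancel_left')
        qed
      qed
    qed
    ultimately show "subgroup_perfect_code H"
      unfolding subgroup_perfect_code_def using assms(2) by blast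
  qed
qed

end
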